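(* (a) For every $M\ge1$ and every $N\times M$ binary matrix $C_{N,M}=(c_{i,a})$, $$\sum_{X\in\{0,1\}^N}\mu_p(X)\,|\mathcal U_0|\ \ge\ B_{M,C_{N,M},p}:=q\sum_{i=1}^N\prod_{a=1}^M\bigl(1-q^{d_a-1}\bigr)^{c_{i,a}},$$ where $q:=1-p$ and $d_a:=\sum_{l=1}^N c_{l,a}$ is the degree of test $a$. (b) If the bipartite graph $\mathcal G(C_{N,M})$ has girth at least $6$, then the inequality in (a) holds with equality.
   Context: Let $N,M\ge1$ be integers and $p\in(0,1)$. A configuration $X=(x_1,\dots,x_N)\in\{0,1\}^N$ is drawn from $\mu_p(X)=\prod_{i} p^{x_i}(1-p)^{1-x_i}$. $C_{N,M}=(c_{i,a})$ is an $N\times M$ binary matrix; variable $i$ belongs to test $a$ iff $c_{i,a}=1$. Test outcome $T_a=0$ if $c_{i,a}x_i=0$ for all $i$, else $T_a=1$. Variable $i$ is a sure zero if some $a$ has $c_{i,a}=1$ and $T_a=0$; $\mathcal U_0$ is the set of $i$ with $x_i=0$ that are not sure zeros. Convention $0^0=1$. $\mathcal G(C_{N,M})$ is the bipartite graph with variable nodes $1,\dots,N$, test nodes $1,\dots,M$ and an edge between $i$ and $a$ iff $c_{i,a}=1$; girth at least $6$ means it has no cycle of length $4$, i.e. no two distinct variables belong to two common distinct tests. *)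

theory Defs
  imports "HOL-Library.FuncSet" Complex_Main
begin

text \<open>Variables are indexed by 0..N-1, tests by 0..M-1.
  The binary matrix is c :: nat => nat => bool (c i a = True iff c_{i,a} = 1).\<close>

definition configs :: "nat \<Rightarrow> (nat \<Rightarrow> bool) set" where
  "configs N = {0..<N} \<rightarrow>\<^sub>E (UNIV :: bool set)"

definition mu :: "real \<Rightarrow> nat \<Rightarrow> (nat \<Rightarrow> bool) \<Rightarrow> real" where
  "mu p N X = (\<Prod>i<N. p ^ (of_bool (X i) :: nat) * (1 - p) ^ (1 - of_bool (X i) :: nat))"

definition test_outcome :: "nat \<Rightarrow> (nat \<Rightarrow> nat \<Rightarrow> bool) \<Rightarrow> (nat \<Rightarrow> bool) \<Rightarrow> nat \<Rightarrow> bool" where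
  "test_outcome N c X a = (\<exists>i<N. c i a \<and> X i)"

definition sure_zero :: "nat \<Rightarrow> nat \<Rightarrow> (nat \<Rightarrow> nat \<Rightarrow> bool) \<Rightarrow> (nat \<Rightarrow> bool) \<Rightarrow> nat \<Rightarrow> bool" where
  "sure_zero N M c X i = (\<exists>a<M. c i a \<and> \<not> test_outcome N c X a)"

definition U0 :: "nat \<Rightarrow> nat \<Rightarrow> (nat \<Rightarrow> nat \<Rightarrow> bool) \<Rightarrow> (nat \<Rightarrow> bool) \<Rightarrow> nat set" where
  "U0 N M c X = {i. i < N \<and> \<not> X i \<and> \<not> sure_zero N M c X i}"

definition test_degree :: "nat \<Rightarrow> (nat \<Rightarrow> nat \<Rightarrow> bool) \<Rightarrow> nat \<Rightarrow> nat" where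
  "test_degree N c a = (\<Sum>l<N. of_bool (c l a))"

definition bound_B :: "nat \<Rightarrow> nat \<Rightarrow> (nat \<Rightarrow> nat \<Rightarrow> bool) \<Rightarrow> real \<Rightarrow> real" where
  "bound_B N M c p = (let q = 1 - p in
     q * (\<Sum>i<N. \<Prod>a<M. (1 - q ^ (test_degree N c a - 1)) ^ (of_bool (c i a) :: nat)))"

text \<open>Girth at least 6: no two distinct variables share two distinct tests.\<close>
definition girth_ge_6 :: "nat \<Rightarrow> nat \<Rightarrow> (nat \<Rightarrow> nat \<Rightarrow> bool) \<Rightarrow> bool" where
  "girth_ge_6 N M c = (\<forall>i<N. \<forall>j<N. \<forall>a<M. \<forall>b<M.
     i \<noteq> j \<and> a \<noteq> b \<longrightarrow> \<not> (c i a \<and> c j a \<and> c i b \<and> c j b))"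

end

theory Submission
  imports Defs
begin

fun Ex :: "real \<Rightarrow> nat \<Rightarrow> ((nat \<Rightarrow> bool) \<Rightarrow> real) \<Rightarrow> real" where
  "Ex p 0 f = f (\<lambda>_. undefined)"
| "Ex p (Suc n) f = p * Ex p n (\<lambda>X. f (X(n:=True))) + (1-p) * Ex p n (\<lambda>X. f (X(n:=False)))"

lemma Ex_add: "Ex p n (\<lambda>X. f X + g X) = Ex p n f + Ex p n g"
  by (induction n arbitrary: f g) (simp_all add: algebra_simps)

lemma Ex_cmult: "Ex p n (\<lambda>X. k * f X) = k * Ex p n f"
  by (induction n arbitrary: f) (simp_all add: algebra_simps)

lemma Ex_const: "Ex p n (\<lambda>_. k) = k"
  by (induction n) (simp_all add: algebra_simps)

lemma Ex_diff: "Ex p n (\<lambda>X. k - f X) = k - Ex p n f"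
proof -
  have "Ex p n (\<lambda>X. k + (-1) * f X) = k + (-1) * Ex p n f"
    by (simp only: Ex_add Ex_const Ex_cmult)
  then show ?thesis by simp
qed

lemma Ex_cong: "(\<And>X. f X = g X) \<Longrightarrow> Ex p n f = Ex p n g"
proof -
  assume "\<And>X. f X = g X" then have "f = g" by auto
  then show ?thesis by simp
qed

lemma Ex_mono: "0 \<le> p \<Longrightarrow> p \<le> 1 \<Longrightarrow> (\<And>X. f X \<le> g X) \<Longrightarrow> Ex p n f \<le> Ex p n g"
proof (induction n arbitrary: f g)
  case 0 then show ?case by simp
next
  case (Suc n)
  have a: "Ex p n (\<lambda>X. f (X(n:=True))) \<le> Ex p n (\<lambda>X. g (X(n:=True)))"
    by (rule Suc.IH[OF Suc.prems(1,2)]) (rule Suc.prems(3))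
  have b: "Ex p n (\<lambda>X. f (X(n:=False))) \<le> Ex p n (\<lambda>X. g (X(n:=False)))"
    by (rule Suc.IH[OF Suc.prems(1,2)]) (rule Suc.prems(3))
  show ?case unfolding Ex.simps
    by (intro add_mono mult_left_mono a b) (use Suc.prems(1,2) in auto)
qed

lemma Ex_sum: "finite I \<Longrightarrow> Ex p n (\<lambda>X. \<Sum>i\<in>I. F i X) = (\<Sum>i\<in>I. Ex p n (F i))"
  by (induction I rule: finite_induct) (simp_all add: Ex_const Ex_add)

definition monof :: "((nat \<Rightarrow> bool) \<Rightarrow> real) \<Rightarrow> bool" where
  "monof f = (\<forall>X Y. (\<forall>i. X i \<longrightarrow> Y i) \<longrightarrow> f X \<le> f Y)"

lemma monof_upd: "monof f \<Longrightarrow> monof (\<lambda>X. f (X(n:=b)))"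
  unfolding monof_def
proof (intro allI impI)
  fix X Y :: "nat \<Rightarrow> bool"
  assume h: "\<forall>X Y. (\<forall>i. X i \<longrightarrow> Y i) \<longrightarrow> f X \<le> f Y" and xy: "\<forall>i. X i \<longrightarrow> Y i"
  have "\<forall>i. (X(n:=b)) i \<longrightarrow> (Y(n:=b)) i" using xy by simp
  then show "f (X(n:=b)) \<le> f (Y(n:=b))" using h by blast
qed

lemma monof_01: "monof f \<Longrightarrow> f (X(n:=False)) \<le> f (X(n:=True))"
proof -
  assume h: "monof f"
  have "\<forall>i. (X(n:=False)) i \<longrightarrow> (X(n:=True)) i" by simp
  then show ?thesis using h unfolding monof_def by blast
qed

lemma harris:
  assumes "0 \<le> p" "p \<le> 1"
  shows "monof f \<Longrightarrow> monof g \<Longrightarrow> Ex p n f * Ex p n g \<le> Ex p n (\<lambda>X. f X * g X)"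
proof (induction n arbitrary: f g)
  case 0 then show ?case by simp
next
  case (Suc n)
  define f1 where "f1 = (\<lambda>X. f (X(n:=True)))"
  define f0 where "f0 = (\<lambda>X. f (X(n:=False)))"
  define g1 where "g1 = (\<lambda>X. g (X(n:=True)))"
  define g0 where "g0 = (\<lambda>X. g (X(n:=False)))"
  have m: "monof f1" "monof f0" "monof g1" "monof g0"
    unfolding f1_def f0_def g1_def g0_def using Suc.prems by (simp_all add: monof_upd)
  have h1: "Ex p n f1 * Ex p n g1 \<le> Ex p n (\<lambda>X. f1 X * g1 X)" by (rule Suc.IH[OF m(1,3)])
  have h0: "Ex p n f0 * Ex p n g0 \<le> Ex p n (\<lambda>X. f0 X * g0 X)" by (rule Suc.IH[OF m(2,4)])
  have fa: "Ex p n f0 \<le> Ex p n f1"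
    unfolding f1_def f0_def by (rule Ex_mono[OF assms]) (rule monof_01[OF Suc.prems(1)])
  have ga: "Ex p n g0 \<le> Ex p n g1"
    unfolding g1_def g0_def by (rule Ex_mono[OF assms]) (rule monof_01[OF Suc.prems(2)])
  define a1 where "a1 = Ex p n f1"
  define a0 where "a0 = Ex p n f0"
  define b1 where "b1 = Ex p n g1"
  define b0 where "b0 = Ex p n g0"
  have id: "p*(a1*b1) + (1-p)*(a0*b0) - (p*a1+(1-p)*a0)*(p*b1+(1-p)*b0) = p*(1-p)*((a1-a0)*(b1-b0))"
    by (simp add: algebra_simps)
  have "0 \<le> p*(1-p)*((a1-a0)*(b1-b0))"
    using assms fa ga unfolding a1_def a0_def b1_def b0_def
    by (intro mult_nonneg_nonneg) auto
  then have L1: "(p*a1+(1-p)*a0)*(p*b1+(1-p)*b0) \<le> p*(a1*b1) + (1-p)*(a0*b0)" using id by linarith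
  have L2: "p*(a1*b1) + (1-p)*(a0*b0) \<le> p * Ex p n (\<lambda>X. f1 X * g1 X) + (1-p) * Ex p n (\<lambda>X. f0 X * g0 X)"
    using h1 h0 assms unfolding a1_def a0_def b1_def b0_def
    by (intro add_mono mult_left_mono) auto
  have E1: "Ex p (Suc n) (\<lambda>X. f X * g X) = p * Ex p n (\<lambda>X. f1 X * g1 X) + (1-p) * Ex p n (\<lambda>X. f0 X * g0 X)"
    by (simp add: f1_def f0_def g1_def g0_def)
  have E2: "Ex p (Suc n) f = p*a1+(1-p)*a0"
    by (simp add: f1_def f0_def a1_def a0_def)
  have E3: "Ex p (Suc n) g = p*b1+(1-p)*b0"
    by (simp add: g1_def g0_def b1_def b0_def)
  show ?case unfolding E1 E2 E3 using L1 L2 by linarith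
qed

definition dep :: "((nat \<Rightarrow> bool) \<Rightarrow> real) \<Rightarrow> nat set \<Rightarrow> bool" where
  "dep f S = (\<forall>X Y. (\<forall>i\<in>S. X i = Y i) \<longrightarrow> f X = f Y)"

lemma indep:
  "dep f S \<Longrightarrow> dep g T \<Longrightarrow> S \<inter> T = {} \<Longrightarrow> Ex p n (\<lambda>X. f X * g X) = Ex p n f * Ex p n g"
proof (induction n arbitrary: f g S T)
  case 0 then show ?case by simp
next
  case (Suc n)
  define f1 where "f1 = (\<lambda>X. f (X(n:=True)))"
  define f0 where "f0 = (\<lambda>X. f (X(n:=False)))"
  define g1 where "g1 = (\<lambda>X. g (X(n:=True)))"
  define g0 where "g0 = (\<lambda>X. g (X(n:=False)))"
  have d: "dep f1 S" "dep f0 S" "dep g1 T" "dep g0 T"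
    using Suc.prems unfolding dep_def f1_def f0_def g1_def g0_def by auto
  have e1: "Ex p n (\<lambda>X. f1 X * g1 X) = Ex p n f1 * Ex p n g1" by (rule Suc.IH[OF d(1,3) Suc.prems(3)])
  have e0: "Ex p n (\<lambda>X. f0 X * g0 X) = Ex p n f0 * Ex p n g0" by (rule Suc.IH[OF d(2,4) Suc.prems(3)])
  have "f1 = f0 \<or> g1 = g0"
  proof (cases "n \<in> S")
    case True
    then have "n \<notin> T" using Suc.prems(3) by auto
    have "g (X(n:=True)) = g (X(n:=False))" for X
      using Suc.prems(2) \<open>n \<notin> T\<close> unfolding dep_def by (metis fun_upd_other)
    then show ?thesis unfolding g1_def g0_def by (intro disjI2 ext)
  next
    case False
    have "f (X(n:=True)) = f (X(n:=False))" for X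
      using Suc.prems(1) False unfolding dep_def by (metis fun_upd_other)
    then show ?thesis unfolding f1_def f0_def by (intro disjI1 ext)
  qed
  have E1: "Ex p (Suc n) (\<lambda>X. f X * g X) = p * Ex p n (\<lambda>X. f1 X * g1 X) + (1-p) * Ex p n (\<lambda>X. f0 X * g0 X)"
    by (simp add: f1_def f0_def g1_def g0_def)
  have E2: "Ex p (Suc n) f = p * Ex p n f1 + (1-p) * Ex p n f0"
    by (simp add: f1_def f0_def)
  have E3: "Ex p (Suc n) g = p * Ex p n g1 + (1-p) * Ex p n g0"
    by (simp add: g1_def g0_def)
  have key: "p * (Ex p n f1 * Ex p n g1) + (1-p) * (Ex p n f0 * Ex p n g0)
      = (p * Ex p n f1 + (1-p) * Ex p n f0) * (p * Ex p n g1 + (1-p) * Ex p n g0)"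
  proof (cases "f1 = f0")
    case True
    show ?thesis unfolding True by (simp add: algebra_simps)
  next
    case False
    then have "g1 = g0" using \<open>f1 = f0 \<or> g1 = g0\<close> by blast
    show ?thesis unfolding \<open>g1 = g0\<close> by (simp add: algebra_simps)
  qed
  show ?case unfolding E1 E2 E3 e1 e0 key ..
qed

lemma Ex_allzero:
  "S \<subseteq> {..<n} \<Longrightarrow> Ex p n (\<lambda>X. of_bool (\<forall>l\<in>S. \<not> X l)) = (1-p) ^ card S"
proof (induction n arbitrary: S)
  case 0 then show ?case by simp
next
  case (Suc n)
  show ?case
  proof (cases "n \<in> S")
    case True
    have fin: "finite S" using Suc.prems finite_subset by blast
    have s: "S - {n} \<subseteq> {..<n}" using Suc.prems by auto
    have f1: "(\<lambda>X. of_bool (\<forall>l\<in>S. \<not> (X(n:=True)) l) :: real) = (\<lambda>_. 0)"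
      using True by (auto intro!: ext)
    have f0: "(\<lambda>X. of_bool (\<forall>l\<in>S. \<not> (X(n:=False)) l) :: real) = (\<lambda>X. of_bool (\<forall>l\<in>S-{n}. \<not> X l))"
      using True by (auto intro!: ext)
    have c: "card S = Suc (card (S - {n}))" using True fin
      by (metis card_Suc_Diff1)
    show ?thesis unfolding Ex.simps f1 f0 Suc.IH[OF s] Ex_const c by simp
  next
    case False
    then have s: "S \<subseteq> {..<n}" using Suc.prems by (auto simp: less_Suc_eq)
    have f1: "(\<lambda>X. of_bool (\<forall>l\<in>S. \<not> (X(n:=True)) l) :: real) = (\<lambda>X. of_bool (\<forall>l\<in>S. \<not> X l))"
      using False by (auto intro!: ext)
    have f0: "(\<lambda>X. of_bool (\<forall>l\<in>S. \<not> (X(n:=False)) l) :: real) = (\<lambda>X. of_bool (\<forall>l\<in>S. \<not> X l))"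
      using False by (auto intro!: ext)
    have "p * (1 - p) ^ card S + (1 - p) * (1 - p) ^ card S = (1 - p) ^ card S"
      by (simp add: algebra_simps)
    then show ?thesis unfolding Ex.simps f1 f0 Suc.IH[OF s] .
  qed
qed


lemma harris_prod:
  assumes "0 \<le> p" "p \<le> 1"
  shows "finite A \<Longrightarrow> (\<And>a. a \<in> A \<Longrightarrow> monof (F a)) \<Longrightarrow> (\<And>a X. a \<in> A \<Longrightarrow> 0 \<le> F a X)
    \<Longrightarrow> (\<Prod>a\<in>A. Ex p n (F a)) \<le> Ex p n (\<lambda>X. \<Prod>a\<in>A. F a X)"
proof (induction A rule: finite_induct)
  case empty then show ?case by (simp add: Ex_const)
next
  case (insert b A)
  have mp: "monof (\<lambda>X. \<Prod>a\<in>A. F a X)"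
    unfolding monof_def
  proof (intro allI impI)
    fix X Y :: "nat \<Rightarrow> bool" assume xy: "\<forall>i. X i \<longrightarrow> Y i"
    show "(\<Prod>a\<in>A. F a X) \<le> (\<Prod>a\<in>A. F a Y)"
    proof (rule prod_mono)
      fix a assume a: "a \<in> A"
      have "F a X \<le> F a Y" using insert.prems(1)[of a] a xy unfolding monof_def by blast
      then show "0 \<le> F a X \<and> F a X \<le> F a Y" using insert.prems(2)[of a] a by auto
    qed
  qed
  have nn: "0 \<le> Ex p n (F b)"
  proof -
    have "Ex p n (\<lambda>_. 0) \<le> Ex p n (F b)" by (rule Ex_mono[OF assms]) (use insert.prems(2) in auto)
    then show ?thesis by (simp add: Ex_const)
  qed
  have ih: "(\<Prod>a\<in>A. Ex p n (F a)) \<le> Ex p n (\<lambda>X. \<Prod>a\<in>A. F a X)"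
    using insert by auto
  have "(\<Prod>a\<in>insert b A. Ex p n (F a)) = Ex p n (F b) * (\<Prod>a\<in>A. Ex p n (F a))"
    using insert by simp
  also have "\<dots> \<le> Ex p n (F b) * Ex p n (\<lambda>X. \<Prod>a\<in>A. F a X)"
    using ih nn by (rule mult_left_mono)
  also have "\<dots> \<le> Ex p n (\<lambda>X. F b X * (\<Prod>a\<in>A. F a X))"
    by (rule harris[OF assms]) (use insert.prems(1) mp in auto)
  also have "\<dots> = Ex p n (\<lambda>X. \<Prod>a\<in>insert b A. F a X)"
    using insert by simp
  finally show ?case .
qed

lemma indep_prod:
  shows "finite A \<Longrightarrow> (\<And>a. a \<in> A \<Longrightarrow> dep (F a) (S a))
    \<Longrightarrow> (\<And>a b. a \<in> A \<Longrightarrow> b \<in> A \<Longrightarrow> a \<noteq> b \<Longrightarrow> S a \<inter> S b = {})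
    \<Longrightarrow> Ex p n (\<lambda>X. \<Prod>a\<in>A. F a X) = (\<Prod>a\<in>A. Ex p n (F a))"
proof (induction A rule: finite_induct)
  case empty then show ?case by (simp add: Ex_const)
next
  case (insert b A)
  have dp: "dep (\<lambda>X. \<Prod>a\<in>A. F a X) (\<Union>a\<in>A. S a)"
    unfolding dep_def
  proof (intro allI impI)
    fix X Y :: "nat \<Rightarrow> bool" assume xy: "\<forall>i\<in>(\<Union>a\<in>A. S a). X i = Y i"
    show "(\<Prod>a\<in>A. F a X) = (\<Prod>a\<in>A. F a Y)"
    proof (rule prod.cong)
      fix a assume a: "a \<in> A"
      have "\<forall>i\<in>S a. X i = Y i" using xy a by blast
      then show "F a X = F a Y" using insert.prems(1)[of a] a unfolding dep_def by blast
    qed simp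
  qed
  have disj: "S b \<inter> (\<Union>a\<in>A. S a) = {}"
    using insert.prems(2) insert.hyps(2) by blast
  have ih: "Ex p n (\<lambda>X. \<Prod>a\<in>A. F a X) = (\<Prod>a\<in>A. Ex p n (F a))"
    using insert by auto
  have "Ex p n (\<lambda>X. \<Prod>a\<in>insert b A. F a X) = Ex p n (\<lambda>X. F b X * (\<Prod>a\<in>A. F a X))"
    using insert by simp
  also have "\<dots> = Ex p n (F b) * Ex p n (\<lambda>X. \<Prod>a\<in>A. F a X)"
    by (rule indep[OF _ dp disj]) (use insert.prems(1) in auto)
  also have "\<dots> = (\<Prod>a\<in>insert b A. Ex p n (F a))"
    using insert ih by simp
  finally show ?case .
qed

lemma mu_upd:
  assumes "X \<in> configs n"
  shows "mu p (Suc n) (X(n:=b)) = (if b then p else 1 - p) * mu p n X"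
proof -
  have "mu p (Suc n) (X(n:=b)) = (\<Prod>i<n. p ^ (of_bool ((X(n:=b)) i) :: nat) * (1 - p) ^ (1 - of_bool ((X(n:=b)) i) :: nat))
     * (p ^ (of_bool b :: nat) * (1 - p) ^ (1 - of_bool b :: nat))"
    unfolding mu_def by (simp add: prod.lessThan_Suc)
  also have "(\<Prod>i<n. p ^ (of_bool ((X(n:=b)) i) :: nat) * (1 - p) ^ (1 - of_bool ((X(n:=b)) i) :: nat)) = mu p n X"
    unfolding mu_def by (rule prod.cong) auto
  also have "mu p n X * (p ^ (of_bool b :: nat) * (1 - p) ^ (1 - of_bool b :: nat)) = (if b then p else 1 - p) * mu p n X"
    by (cases b) simp_all
  finally show ?thesis .
qed

lemma Ex_configs: "Ex p n f = (\<Sum>X\<in>configs n. mu p n X * f X)"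
proof (induction n arbitrary: f)
  case 0 then show ?case by (simp add: configs_def mu_def)
next
  case (Suc n)
  have ce: "configs (Suc n) = (\<lambda>(y, g). g(n := y)) ` (UNIV \<times> configs n)"
    unfolding configs_def
    by (metis PiE_insert_eq atLeast0_lessThan_Suc)
  have inj: "inj_on (\<lambda>(y, g). g(n := y)) (UNIV \<times> configs n)"
    unfolding configs_def using inj_combinator[of n "{0..<n}" "\<lambda>_. UNIV :: bool set"] by simp
  have "(\<Sum>X\<in>configs (Suc n). mu p (Suc n) X * f X)
      = (\<Sum>(y,g)\<in>UNIV \<times> configs n. mu p (Suc n) (g(n := y)) * f (g(n := y)))"
    unfolding ce by (subst sum.reindex[OF inj]) (simp add: comp_def case_prod_unfold)
  also have "\<dots> = (\<Sum>y\<in>UNIV. \<Sum>g\<in>configs n. mu p (Suc n) (g(n := y)) * f (g(n := y)))"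
    by (subst sum.cartesian_product) simp
  also have "\<dots> = (\<Sum>g\<in>configs n. mu p (Suc n) (g(n := True)) * f (g(n := True)))
      + (\<Sum>g\<in>configs n. mu p (Suc n) (g(n := False)) * f (g(n := False)))"
    by (simp add: UNIV_bool)
  also have "(\<Sum>g\<in>configs n. mu p (Suc n) (g(n := True)) * f (g(n := True)))
      = p * (\<Sum>g\<in>configs n. mu p n g * f (g(n := True)))"
    by (simp add: sum_distrib_left mu_upd mult.assoc cong: sum.cong)
  also have "(\<Sum>g\<in>configs n. mu p (Suc n) (g(n := False)) * f (g(n := False)))
      = (1-p) * (\<Sum>g\<in>configs n. mu p n g * f (g(n := False)))"
    by (simp add: sum_distrib_left mu_upd mult.assoc cong: sum.cong)
  finally show ?case unfolding Ex.simps Suc.IH by (rule sym)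
qed


lemma prod_of_bool_real: "finite A \<Longrightarrow> (\<Prod>a\<in>A. (of_bool (P a) :: real)) = of_bool (\<forall>a\<in>A. P a)"
  by (induction A rule: finite_induct) auto

lemma dep_prod:
  assumes "\<And>a. a \<in> A \<Longrightarrow> dep (F a) (S a)"
  shows "dep (\<lambda>X. \<Prod>a\<in>A. F a X) (\<Union>a\<in>A. S a)"
  unfolding dep_def
proof (intro allI impI)
  fix X Y :: "nat \<Rightarrow> bool" assume xy: "\<forall>i\<in>(\<Union>a\<in>A. S a). X i = Y i"
  show "(\<Prod>a\<in>A. F a X) = (\<Prod>a\<in>A. F a Y)"
  proof (rule prod.cong)
    fix a assume a: "a \<in> A"
    have "\<forall>i\<in>S a. X i = Y i" using xy a by blast
    then show "F a X = F a Y" using assms[of a] a unfolding dep_def by blast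
  qed simp
qed

lemma per_i:
  fixes N M :: nat and c :: "nat \<Rightarrow> nat \<Rightarrow> bool" and p :: real
  assumes p: "0 < p" "p < 1" and i: "i < N"
  defines "A \<equiv> {a\<in>{..<M}. c i a}"
    and "S \<equiv> \<lambda>a. {l. l < N \<and> c l a \<and> l \<noteq> i}"
    and "F \<equiv> \<lambda>a X. (of_bool (\<exists>l\<in>{l. l < N \<and> c l a \<and> l \<noteq> i}. X l) :: real)"
  shows "Ex p N (\<lambda>X. of_bool (i \<in> U0 N M c X)) = (1-p) * Ex p N (\<lambda>X. \<Prod>a\<in>A. F a X)"
    and "(\<Prod>a\<in>A. Ex p N (F a)) = (\<Prod>a<M. (1 - (1-p) ^ (test_degree N c a - 1)) ^ (of_bool (c i a) :: nat))"
    and "(\<Prod>a\<in>A. Ex p N (F a)) \<le> Ex p N (\<lambda>X. \<Prod>a\<in>A. F a X)"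
    and "girth_ge_6 N M c \<Longrightarrow> Ex p N (\<lambda>X. \<Prod>a\<in>A. F a X) = (\<Prod>a\<in>A. Ex p N (F a))"
proof -
  have finA: "finite A" unfolding A_def by simp
  have FS: "F = (\<lambda>a X. (of_bool (\<exists>l\<in>S a. X l) :: real))" unfolding F_def S_def ..
  have depF: "dep (F a) (S a)" for a unfolding dep_def FS by auto
  have monoF: "monof (F a)" for a unfolding monof_def FS by auto
  have pt: "of_bool (i \<in> U0 N M c X) = of_bool (\<not> X i) * (\<Prod>a\<in>A. F a X)" for X
  proof -
    have "(i \<in> U0 N M c X) = (\<not> X i \<and> (\<forall>a\<in>A. \<exists>l\<in>S a. X l))"
      unfolding U0_def sure_zero_def test_outcome_def A_def S_def using i by auto
    then show ?thesis unfolding FS prod_of_bool_real[OF finA] by simp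
  qed
  have d1: "dep (\<lambda>X. of_bool (\<not> X i)) {i}" unfolding dep_def by auto
  have d2: "dep (\<lambda>X. \<Prod>a\<in>A. F a X) (\<Union>a\<in>A. S a)" by (rule dep_prod) (rule depF)
  have dj: "{i} \<inter> (\<Union>a\<in>A. S a) = {}" unfolding S_def by auto
  have q: "Ex p N (\<lambda>X. of_bool (\<not> X i)) = 1 - p"
  proof -
    have "Ex p N (\<lambda>X. of_bool (\<not> X i)) = Ex p N (\<lambda>X. of_bool (\<forall>l\<in>{i}. \<not> X l))" by simp
    also have "\<dots> = (1-p) ^ card {i}" by (rule Ex_allzero) (use i in auto)
    finally show ?thesis by simp
  qed
  show "Ex p N (\<lambda>X. of_bool (i \<in> U0 N M c X)) = (1-p) * Ex p N (\<lambda>X. \<Prod>a\<in>A. F a X)"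
    unfolding pt indep[OF d1 d2 dj] q ..
  have EF: "Ex p N (F a) = 1 - (1-p) ^ (test_degree N c a - 1)" if a: "a \<in> A" for a
  proof -
    have "Ex p N (F a) = Ex p N (\<lambda>X. 1 - of_bool (\<forall>l\<in>S a. \<not> X l))"
      unfolding FS by (rule Ex_cong) auto
    also have "\<dots> = 1 - (1-p) ^ card (S a)"
      unfolding Ex_diff by (subst Ex_allzero) (auto simp: S_def)
    also have "card (S a) = test_degree N c a - 1"
    proof -
      have td: "test_degree N c a = card ({..<N} \<inter> {l. c l a})"
        unfolding test_degree_def by simp
      have "S a = ({..<N} \<inter> {l. c l a}) - {i}" unfolding S_def by auto
      moreover have "i \<in> {..<N} \<inter> {l. c l a}" using a i unfolding A_def by auto
      ultimately show ?thesis unfolding td by (simp add: card_Diff_singleton)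
    qed
    finally show ?thesis .
  qed
  have "(\<Prod>a\<in>A. Ex p N (F a)) = (\<Prod>a\<in>A. 1 - (1-p) ^ (test_degree N c a - 1))"
    by (rule prod.cong) (simp_all add: EF)
  also have "\<dots> = (\<Prod>a<M. if c i a then 1 - (1-p) ^ (test_degree N c a - 1) else 1)"
    unfolding A_def by (rule prod.inter_filter) simp
  also have "\<dots> = (\<Prod>a<M. (1 - (1-p) ^ (test_degree N c a - 1)) ^ (of_bool (c i a) :: nat))"
    by (rule prod.cong) auto
  finally show "(\<Prod>a\<in>A. Ex p N (F a)) = (\<Prod>a<M. (1 - (1-p) ^ (test_degree N c a - 1)) ^ (of_bool (c i a) :: nat))" .
  show "(\<Prod>a\<in>A. Ex p N (F a)) \<le> Ex p N (\<lambda>X. \<Prod>a\<in>A. F a X)"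
    by (rule harris_prod) (use p finA monoF in \<open>auto simp: FS\<close>)
  assume g: "girth_ge_6 N M c"
  show "Ex p N (\<lambda>X. \<Prod>a\<in>A. F a X) = (\<Prod>a\<in>A. Ex p N (F a))"
  proof (rule indep_prod[OF finA depF])
    fix a b assume ab: "a \<in> A" "b \<in> A" "a \<noteq> b"
    show "S a \<inter> S b = {}"
    proof (rule ccontr)
      assume "S a \<inter> S b \<noteq> {}"
      then obtain l where l: "l < N" "c l a" "c l b" "l \<noteq> i" unfolding S_def by auto
      have "a < M" "b < M" "c i a" "c i b" using ab unfolding A_def by auto
      then show False using g l i ab(3) unfolding girth_ge_6_def by blast
    qed
  qed
qed


theorem lemma1:
  fixes N M :: nat and p :: real and c :: "nat \<Rightarrow> nat \<Rightarrow> bool"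
  assumes "N \<ge> 1" and "M \<ge> 1" and "0 < p" and "p < 1"
  shows "(\<Sum>X\<in>configs N. mu p N X * real (card (U0 N M c X))) \<ge> bound_B N M c p
         \<and> (girth_ge_6 N M c \<longrightarrow>
         (\<Sum>X\<in>configs N. mu p N X * real (card (U0 N M c X))) = bound_B N M c p)"
proof -
  define V where "V i = Ex p N (\<lambda>X. of_bool (i \<in> U0 N M c X))" for i
  define W where "W i = (1-p) * (\<Prod>a<M. (1 - (1-p) ^ (test_degree N c a - 1)) ^ (of_bool (c i a) :: nat))" for i
  have crd: "real (card (U0 N M c X)) = (\<Sum>i<N. of_bool (i \<in> U0 N M c X))" for X
  proof -
    have "{..<N} \<inter> {i. i \<in> U0 N M c X} = U0 N M c X" by (auto simp: U0_def)
    then show ?thesis by simp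
  qed
  have L: "(\<Sum>X\<in>configs N. mu p N X * real (card (U0 N M c X))) = (\<Sum>i<N. V i)"
  proof -
    have "(\<Sum>X\<in>configs N. mu p N X * real (card (U0 N M c X))) = Ex p N (\<lambda>X. real (card (U0 N M c X)))"
      by (rule Ex_configs[symmetric])
    also have "\<dots> = Ex p N (\<lambda>X. \<Sum>i<N. of_bool (i \<in> U0 N M c X))" by (rule Ex_cong) (rule crd)
    also have "\<dots> = (\<Sum>i<N. V i)" unfolding V_def by (rule Ex_sum) simp
    finally show ?thesis .
  qed
  have R: "bound_B N M c p = (\<Sum>i<N. W i)"
    unfolding bound_B_def W_def Let_def by (simp add: sum_distrib_left)
  have ge: "W i \<le> V i" if "i < N" for i
  proof -
    note P = per_i[where M=M and c=c, OF assms(3,4) that]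
    have "0 \<le> 1 - p" using assms by simp
    then show ?thesis unfolding V_def W_def P(1) P(2)[symmetric]
      by (rule mult_left_mono[OF P(3)])
  qed
  have eq: "W i = V i" if "i < N" "girth_ge_6 N M c" for i
  proof -
    note P = per_i[where M=M and c=c, OF assms(3,4) that(1)]
    show ?thesis unfolding V_def W_def P(1) P(2)[symmetric] P(4)[OF that(2)] ..
  qed
  show ?thesis
    unfolding L R using ge eq by (auto intro: sum_mono sum.cong)
qed

end
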